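(* Let $H$ be a digraph with at least two vertices and $r\in V(H)$ such that every vertex of $H$ is reachable from $r$, and let $(\hat T,\{B_x\}_{x\in V(\hat T)})$ be the $r$-rooted cut decomposition of $H$. Let $R$ be the set of arcs $uv\in A(H)$ such that $v\in V(\hat T)$ and $u\in B_x$ for some node $x$ of the subtree $\hat T_v$ (i.e. $v$ is an ancestor of $x$ or $v=x$). Then every out-tree $T$ in $H$ rooted at $r$ satisfies $A(T)\cap R=\emptyset$.
   Context: Digraphs are finite and without loops; paths are directed. An out-tree is an oriented tree with exactly one vertex of in-degree zero (its root). A vertex $v$ is bi-reachable from $r$ if there are two internally vertex-disjoint directed paths from $r$ to $v$. For a digraph $H$ with at least two vertices and $r\in V(H)$ such that every vertex of $H$ is reachable from $r$, the diblock $B_r$ of $r$ in $H$ is the set of all vertices bi-reachable from $r$, together with $r$ and all out-neighbours of $r$. For $x\in B_r\setminus\{r\}$ let $X_x$ be the set of vertices $v\in V(H)\setminus B_r$ such that every directed $r$–$v$ path intersects $B_r$ for the last time in $x$; $x$ is a bottleneck of $B_r$ if $X_x\ne\emptyset$ (the sets $X_x$ partition $V(H)\setminus B_r$). The $r$-rooted cut decomposition $(\hat T,\{B_x\}_{x\in V(\hat T)})$ of $H$ is defined recursively: $\hat T$ is a rooted tree with root $r$ and $V(\hat T)\subseteq V(H)$; the set associated with the root is $B_r$; the children of $r$ are the bottlenecks of $B_r$; and for each bottleneck $x$, the subtree of $\hat T$ rooted at $x$ together with its associated sets is the $x$-rooted cut decomposition of the induced subgraph $H[X_x\cup\{x\}]$.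 For a node $x$, $\hat T_x$ is the subtree of $\hat T$ rooted at $x$. *)

theory Defs
  imports Main
begin

definition is_dpath :: "'a set \<Rightarrow> ('a \<times> 'a) set \<Rightarrow> 'a list \<Rightarrow> bool" where
  "is_dpath V A p \<longleftrightarrow> p \<noteq> [] \<and> distinct p \<and> set p \<subseteq> V \<and>
     (\<forall>i. Suc i < length p \<longrightarrow> (p ! i, p ! Suc i) \<in> A)"

definition dpath_from :: "'a set \<Rightarrow> ('a \<times> 'a) set \<Rightarrow> 'a \<Rightarrow> 'a \<Rightarrow> 'a list \<Rightarrow> bool" where
  "dpath_from V A u v p \<longleftrightarrow> is_dpath V A p \<and> hd p = u \<and> last p = v"

definition internal_verts :: "'a list \<Rightarrow> 'a set" where
  "internal_verts p = set (butlast (tl p))"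

definition bireachable :: "'a set \<Rightarrow> ('a \<times> 'a) set \<Rightarrow> 'a \<Rightarrow> 'a \<Rightarrow> bool" where
  "bireachable V A r v \<longleftrightarrow> (\<exists>p q. dpath_from V A r v p \<and> dpath_from V A r v q \<and>
      internal_verts p \<inter> internal_verts q = {})"

definition diblock :: "'a set \<Rightarrow> ('a \<times> 'a) set \<Rightarrow> 'a \<Rightarrow> 'a set" where
  "diblock V A r = {v \<in> V. bireachable V A r v} \<union> {r} \<union> {v \<in> V. (r, v) \<in> A}"

definition Xset :: "'a set \<Rightarrow> ('a \<times> 'a) set \<Rightarrow> 'a \<Rightarrow> 'a \<Rightarrow> 'a set" where
  "Xset V A r x = {v \<in> V - diblock V A r. (\<exists>p. dpath_from V A r v p) \<and>
      (\<forall>p. dpath_from V A r v p \<longrightarrow> last (filter (\<lambda>w. w \<in> diblock V A r) p) = x)}"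

definition bottleneck :: "'a set \<Rightarrow> ('a \<times> 'a) set \<Rightarrow> 'a \<Rightarrow> 'a \<Rightarrow> bool" where
  "bottleneck V A r x \<longleftrightarrow> x \<in> diblock V A r - {r} \<and> Xset V A r x \<noteq> {}"

definition induced_arcs :: "('a \<times> 'a) set \<Rightarrow> 'a set \<Rightarrow> ('a \<times> 'a) set" where
  "induced_arcs A W = A \<inter> (W \<times> W)"

text \<open>Nodes of the r-rooted cut decomposition of (V,A): cd_node V A r x W means that x is a
  node of the decomposition tree and the subtree rooted at x is the x-rooted cut decomposition
  of the induced subdigraph on W (so W = V for the root, W = X_x \<union> {x} for a child x).
  The set associated with node x is diblock W (induced_arcs A W) x.\<close>
inductive cd_node :: "'a set \<Rightarrow> ('a \<times> 'a) set \<Rightarrow> 'a \<Rightarrow> 'a \<Rightarrow> 'a set \<Rightarrow> bool"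
  for V A r where
  cd_root: "cd_node V A r r V"
| cd_child: "cd_node V A r x W \<Longrightarrow> bottleneck W (induced_arcs A W) x y \<Longrightarrow>
     cd_node V A r y (Xset W (induced_arcs A W) x y \<union> {y})"

definition R_arcs :: "'a set \<Rightarrow> ('a \<times> 'a) set \<Rightarrow> 'a \<Rightarrow> ('a \<times> 'a) set" where
  "R_arcs V A r = {(u, v) \<in> A. \<exists>Wv. cd_node V A r v Wv \<and>
      (\<exists>x Wx. cd_node Wv (induced_arcs A Wv) v x Wx \<and>
              u \<in> diblock Wx (induced_arcs A Wx) x)}"

definition digraph :: "'a set \<Rightarrow> ('a \<times> 'a) set \<Rightarrow> bool" where
  "digraph V A \<longleftrightarrow> finite V \<and> A \<subseteq> V \<times> V \<and> (\<forall>v. (v, v) \<notin> A)"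

text \<open>Out-tree (VT,AT) rooted at r: an oriented tree (underlying undirected multigraph is a
  tree: connected with |AT| = |VT| - 1) with exactly one vertex of in-degree zero, namely r.\<close>
definition out_tree :: "'a set \<Rightarrow> ('a \<times> 'a) set \<Rightarrow> 'a \<Rightarrow> bool" where
  "out_tree VT AT r \<longleftrightarrow> finite VT \<and> AT \<subseteq> VT \<times> VT \<and> r \<in> VT \<and>
     (\<forall>v\<in>VT. (r, v) \<in> (AT \<union> AT\<inverse>)\<^sup>*) \<and> card AT + 1 = card VT \<and>
     {v \<in> VT. \<not> (\<exists>u. (u, v) \<in> AT)} = {r}"

end

theory Submission
  imports Defs
begin

lemma dp_app2: "is_dpath V A (xs @ ys) \<Longrightarrow> ys \<noteq> [] \<Longrightarrow> is_dpath V A ys"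
proof -
  assume h: "is_dpath V A (xs @ ys)" and ne: "ys \<noteq> []"
  have arcs: "\<forall>i. Suc i < length ys \<longrightarrow> (ys ! i, ys ! Suc i) \<in> A"
  proof (intro allI impI)
    fix i assume i: "Suc i < length ys"
    have "Suc (length xs + i) < length (xs @ ys)" using i by simp
    then have "((xs @ ys) ! (length xs + i), (xs @ ys) ! Suc (length xs + i)) \<in> A"
      using h unfolding is_dpath_def by blast
    moreover have "(xs @ ys) ! Suc (length xs + i) = ys ! Suc i"
      by (metis add_Suc_right nth_append_length_plus)
    ultimately show "(ys ! i, ys ! Suc i) \<in> A" by simp
  qed
  then show ?thesis using h ne unfolding is_dpath_def by auto
qed

lemma dp_app1: "is_dpath V A (xs @ ys) \<Longrightarrow> xs \<noteq> [] \<Longrightarrow> is_dpath V A xs"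
  unfolding is_dpath_def
proof (intro conjI allI impI)
  fix i assume h: "xs @ ys \<noteq> [] \<and> distinct (xs @ ys) \<and> set (xs @ ys) \<subseteq> V \<and>
    (\<forall>i. Suc i < length (xs @ ys) \<longrightarrow> ((xs @ ys) ! i, (xs @ ys) ! Suc i) \<in> A)" and i: "Suc i < length xs"
  then have "((xs @ ys) ! i, (xs @ ys) ! Suc i) \<in> A" by auto
  then show "(xs ! i, xs ! Suc i) \<in> A" using i by (simp add: nth_append)
qed auto

lemma dp_snoc: "is_dpath V A p \<Longrightarrow> t \<in> V \<Longrightarrow> t \<notin> set p \<Longrightarrow> (last p, t) \<in> A \<Longrightarrow> is_dpath V A (p @ [t])"
  unfolding is_dpath_def
proof (intro conjI allI impI)
  fix i assume h: "p \<noteq> [] \<and> distinct p \<and> set p \<subseteq> V \<and> (\<forall>i. Suc i < length p \<longrightarrow> (p ! i, p ! Suc i) \<in> A)"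
    and l: "(last p, t) \<in> A" and i: "Suc i < length (p @ [t])"
  show "((p @ [t]) ! i, (p @ [t]) ! Suc i) \<in> A"
  proof (cases "Suc i < length p")
    case True then show ?thesis using h by (simp add: nth_append)
  next
    case False
    then have "Suc i = length p" using i by simp
    then have "i = length p - 1" by simp
    then show ?thesis using h l by (simp add: nth_append last_conv_nth)
  qed
qed auto

lemma dp_mono: "is_dpath V A p \<Longrightarrow> set p \<subseteq> W \<Longrightarrow> is_dpath W (induced_arcs A W) p"
  unfolding is_dpath_def induced_arcs_def
  by (metis IntI Suc_lessD mem_Sigma_iff nth_mem subset_code(1))

lemma dp_mono2: "is_dpath V A p \<Longrightarrow> V \<subseteq> V' \<Longrightarrow> A \<subseteq> A' \<Longrightarrow> is_dpath V' A' p"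
  unfolding is_dpath_def by blast

lemma D2R: "is_dpath V A p \<Longrightarrow> (\<And>c d. (c,d) \<in> A \<Longrightarrow> c \<in> set p \<Longrightarrow> d \<in> set p \<Longrightarrow> (c,d) \<in> R)
   \<Longrightarrow> (hd p, last p) \<in> R\<^sup>*"
proof (induction p)
  case Nil then show ?case by (simp add: is_dpath_def)
next
  case (Cons a p)
  show ?case
  proof (cases "p = []")
    case True then show ?thesis by simp
  next
    case False
    have dp: "is_dpath V A p" using dp_app2[of V A "[a]" p] Cons.prems(1) False by simp
    have "(a, hd p) \<in> A" using Cons.prems(1) False unfolding is_dpath_def
      by (metis hd_conv_nth length_Cons length_greater_0_conv nth_Cons_0 nth_Cons_Suc Suc_less_eq)
    then have "(a, hd p) \<in> R" using Cons.prems(2) False by simp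
    moreover have "(hd p, last p) \<in> R\<^sup>*" using Cons.IH[OF dp] Cons.prems(2) by simp
    ultimately show ?thesis using False by simp
  qed
qed

lemma W2P: "(s,t) \<in> E\<^sup>* \<Longrightarrow> E \<subseteq> A \<inter> (S \<times> S) \<Longrightarrow> s \<in> S \<Longrightarrow> S \<subseteq> V \<Longrightarrow>
   \<exists>p. dpath_from V A s t p \<and> set p \<subseteq> S"
proof (induction t rule: rtrancl_induct)
  case base
  then show ?case by (intro exI[of _ "[s]"]) (auto simp: dpath_from_def is_dpath_def)
next
  case (step m t)
  then obtain p where p: "dpath_from V A s m p" "set p \<subseteq> S" by auto
  have tS: "t \<in> S" "(m,t) \<in> A" using step by auto
  show ?case
  proof (cases "t \<in> set p")
    case True
    then obtain p1 p2 where pp: "p = p1 @ t # p2" by (meson split_list)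
    have "is_dpath V A (p1 @ [t])" using p(1) pp dp_app1[of V A "p1 @ [t]" p2]
      by (simp add: dpath_from_def)
    moreover have "hd (p1 @ [t]) = s" using p(1) pp by (cases p1) (auto simp: dpath_from_def)
    ultimately show ?thesis using p pp by (intro exI[of _ "p1 @ [t]"]) (auto simp: dpath_from_def)
  next
    case False
    have "is_dpath V A (p @ [t])" using dp_snoc[of V A p t] p tS False step.prems
      by (auto simp: dpath_from_def)
    moreover have "hd (p @ [t]) = s" using p(1) by (auto simp: dpath_from_def is_dpath_def)
    ultimately show ?thesis using p tS by (intro exI[of _ "p @ [t]"]) (auto simp: dpath_from_def)
  qed
qed

lemma F_last_in: "filter P xs \<noteq> [] \<Longrightarrow> last (filter P xs) \<in> set xs \<and> P (last (filter P xs))"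
  using last_in_set[of "filter P xs"] by auto

lemma F_split: "filter P xs \<noteq> [] \<Longrightarrow> \<exists>ys zs. xs = ys @ last (filter P xs) # zs \<and> filter P zs = []"
proof (induction xs rule: rev_induct)
  case Nil then show ?case by simp
next
  case (snoc x xs)
  show ?case
  proof (cases "P x")
    case True then show ?thesis by (intro exI[of _ xs] exI[of _ "[]"]) simp
  next
    case False
    then have "filter P (xs @ [x]) = filter P xs" by simp
    with snoc obtain ys zs where "xs = ys @ last (filter P xs) # zs" "filter P zs = []" by auto
    then show ?thesis using False
      by (intro exI[of _ ys] exI[of _ "zs @ [x]"]) auto
  qed
qed

lemma F_after: "xs = q1 @ y # q2 \<Longrightarrow> P y \<Longrightarrow> last (filter P xs) = y \<Longrightarrow> distinct xs \<Longrightarrow> filter P q2 = []"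
proof (rule ccontr)
  assume a: "xs = q1 @ y # q2" "P y" "last (filter P xs) = y" "distinct xs" "filter P q2 \<noteq> []"
  then have "last (filter P xs) = last (filter P q2)" by simp
  then have "y \<in> set q2" using a F_last_in[of P q2] by simp
  then show False using a by simp
qed

lemma internal_cover: "p \<noteq> [] \<Longrightarrow> set p \<subseteq> {hd p, last p} \<union> internal_verts p"
  unfolding internal_verts_def
proof -
  assume "p \<noteq> []"
  then obtain a t where p: "p = a # t" by (cases p) auto
  show "set p \<subseteq> {hd p, last p} \<union> set (butlast (tl p))"
  proof (cases "t = []")
    case True then show ?thesis using p by simp
  next
    case False
    then have "set t = set (butlast t) \<union> {last t}"
      by (metis append_butlast_last_id set_append empty_set list.simps(15) Un_insert_right sup_bot_right)
    then show ?thesis using p False by auto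
  qed
qed


lemma sum_ge1_eq: "finite S \<Longrightarrow> (\<forall>x\<in>S. f x \<ge> (1::nat)) \<Longrightarrow> sum f S = card S \<Longrightarrow> x \<in> S \<Longrightarrow> f x = 1"
proof (rule ccontr)
  assume a: "finite S" "\<forall>x\<in>S. f x \<ge> (1::nat)" "sum f S = card S" "x \<in> S" "f x \<noteq> 1"
  have "sum (\<lambda>_. 1) S < sum f S"
  proof (rule sum_strict_mono_ex1)
    show "\<exists>a\<in>S. 1 < f a" using a by (intro bexI[of _ x]) force+
  qed (use a in auto)
  then show False using a by simp
qed

lemma tree_unique_parent:
  assumes ot: "out_tree VT AT r" and v: "v \<in> VT" "v \<noteq> r" and a: "(a,v) \<in> AT" "(b,v) \<in> AT"
  shows "a = b"
proof -
  define inA where "inA w = {e \<in> AT. snd e = w}" for w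
  have fin: "finite VT" and sub: "AT \<subseteq> VT \<times> VT" and cnt: "card AT + 1 = card VT"
    and zero: "{v \<in> VT. \<not> (\<exists>u. (u, v) \<in> AT)} = {r}" and rV: "r \<in> VT"
    using ot unfolding out_tree_def by auto
  have finA: "finite AT" using fin sub by (meson finite_SigmaI rev_finite_subset)
  have U: "AT = (\<Union>w\<in>VT. inA w)" using sub unfolding inA_def by auto
  have "card AT = (\<Sum>w\<in>VT. card (inA w))"
    unfolding U using fin finA
    by (intro card_UN_disjoint) (auto simp: inA_def)
  moreover have "inA r = {}" using zero unfolding inA_def by auto
  ultimately have s: "card AT = (\<Sum>w\<in>VT-{r}. card (inA w))"
    using fin rV by (simp add: sum.remove)
  have ge: "\<forall>w\<in>VT-{r}. card (inA w) \<ge> 1"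
  proof
    fix w assume w: "w \<in> VT - {r}"
    then obtain u where "(u,w) \<in> AT" using zero by auto
    then have "inA w \<noteq> {}" unfolding inA_def by auto
    moreover have "finite (inA w)" using finA unfolding inA_def by auto
    ultimately show "card (inA w) \<ge> 1" by (simp add: Suc_le_eq card_gt_0_iff)
  qed
  have "card (VT - {r}) = card AT" using cnt fin rV by simp
  then have "card (inA v) = 1" using sum_ge1_eq[of "VT-{r}" "\<lambda>w. card (inA w)" v] fin ge s v by simp
  moreover have "(a,v) \<in> inA v" "(b,v) \<in> inA v" using a unfolding inA_def by auto
  ultimately show ?thesis by (metis card_1_singletonE prod.inject singletonD)
qed

lemma tree_reach:
  assumes ot: "out_tree VT AT r" and v: "v \<in> VT"
  shows "(r,v) \<in> AT\<^sup>*"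
proof -
  have sub: "AT \<subseteq> VT \<times> VT" and zero: "{v \<in> VT. \<not> (\<exists>u. (u, v) \<in> AT)} = {r}"
    and c: "(r, v) \<in> (AT \<union> AT\<inverse>)\<^sup>*"
    using ot v unfolding out_tree_def by auto
  from c show ?thesis
  proof (induction v rule: rtrancl_induct)
    case base then show ?case by simp
  next
    case (step w w')
    show ?case
    proof (cases "(w,w') \<in> AT")
      case True then show ?thesis using step by simp
    next
      case False
      then have ww: "(w',w) \<in> AT" using step by auto
      then have wV: "w \<in> VT" using sub by auto
      have "w \<noteq> r" using ww zero by auto
      then obtain m where m: "(r,m) \<in> AT\<^sup>*" "(m,w) \<in> AT" using step.IH
        by (metis rtranclE)
      have "m = w'" using tree_unique_parent[OF ot wV \<open>w \<noteq> r\<close> m(2) ww] .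
      then show ?thesis using m by simp
    qed
  qed
qed

lemma cd_sub: "cd_node V' A' r' x W \<Longrightarrow> r' \<in> V' \<Longrightarrow> x \<in> W \<and> W \<subseteq> V'"
proof (induction rule: cd_node.induct)
  case cd_root then show ?case by simp
next
  case (cd_child x W y)
  have "y \<in> W" using cd_child.hyps(2) cd_child.IH cd_child.prems
    unfolding bottleneck_def diblock_def by auto
  moreover have "Xset W (induced_arcs A' W) x y \<subseteq> W" unfolding Xset_def by auto
  ultimately show ?case using cd_child.IH cd_child.prems by auto
qed


definition Inv :: "'a set \<Rightarrow> ('a \<times> 'a) set \<Rightarrow> 'a \<Rightarrow> 'a \<Rightarrow> 'a set \<Rightarrow> bool" where
  "Inv V A r x W \<longleftrightarrow> (\<forall>p u. dpath_from V A r u p \<longrightarrow> u \<in> W \<longrightarrow>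
      (\<exists>p1 p2. p = p1 @ x # p2 \<and> set (x # p2) \<subseteq> W))"

lemma avoid_y:
  assumes dp: "is_dpath V A p" and y: "y \<notin> set p"
  shows "(hd p, last p) \<in> {(c,d) \<in> A. c \<noteq> y \<and> d \<noteq> y}\<^sup>*"
  using D2R[OF dp, of "{(c,d) \<in> A. c \<noteq> y \<and> d \<noteq> y}"] y by auto

lemma step_inv:
  assumes IH: "Inv V A r x W"
    and bn: "bottleneck W (induced_arcs A W) x y"
  shows "Inv V A r y (Xset W (induced_arcs A W) x y \<union> {y})"
  unfolding Inv_def
proof (intro allI impI)
  fix p u
  assume pd: "dpath_from V A r u p" and uin: "u \<in> Xset W (induced_arcs A W) x y \<union> {y}"
  define E where "E = induced_arcs A W"
  define B where "B = diblock W E x"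
  define Xs where "Xs = Xset W E x y"
  have yB: "y \<in> B" "y \<noteq> x" using bn unfolding bottleneck_def B_def E_def by auto
  have yW: "y \<in> W" using yB unfolding B_def diblock_def by auto
  have xB: "x \<in> B" unfolding B_def diblock_def by auto
  have EW: "E \<subseteq> W \<times> W" unfolding E_def induced_arcs_def by auto
  have uW: "u \<in> W" using uin yW unfolding Xset_def by auto
  obtain p1 p2 where pp: "p = p1 @ x # p2" "set (x # p2) \<subseteq> W"
    using IH pd uW unfolding Inv_def by blast
  define q where "q = x # p2"
  have dpV: "is_dpath V A p" and dist: "distinct p" and lp: "last p = u"
    using pd unfolding dpath_from_def is_dpath_def by auto
  have qd: "dpath_from W E x u q"
  proof -
    have "is_dpath V A q" using dp_app2[of V A p1 q] dpV pp unfolding q_def by simp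
    then have "is_dpath W E q" using dp_mono pp unfolding q_def E_def by blast
    moreover have "last q = u" using lp pp unfolding q_def by simp
    ultimately show ?thesis unfolding dpath_from_def q_def by simp
  qed
  have distq: "distinct q" using dist pp unfolding q_def by simp
  show "\<exists>p1 p2. p = p1 @ y # p2 \<and> set (y # p2) \<subseteq> Xset W (induced_arcs A W) x y \<union> {y}"
  proof (cases "u = y")
    case True
    have "p \<noteq> []" using pp by simp
    then have "p = butlast p @ [y]" using lp True by (metis append_butlast_last_id)
    then show ?thesis by (intro exI[of _ "butlast p"] exI[of _ "[]"]) auto
  next
    case False
    then have uX: "u \<in> Xs" using uin unfolding Xs_def E_def by auto
    have hx: "last (filter (\<lambda>w. w \<in> B) q) = y"
      using uX qd unfolding Xs_def Xset_def B_def by blast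
    have fne: "filter (\<lambda>w. w \<in> B) q \<noteq> []" using xB unfolding q_def by simp
    have "y \<in> set q" using F_last_in[OF fne] hx by simp
    then obtain q1 q2 where qq: "q = q1 @ y # q2" by (meson split_list)
    have fq2: "filter (\<lambda>w. w \<in> B) q2 = []"
      using F_after[OF qq, of "\<lambda>w. w \<in> B"] yB hx distq by simp
    have yq2: "y \<notin> set q2" using distq qq by simp
    have qdp: "is_dpath W E q" and qW: "set q \<subseteq> W" using qd unfolding dpath_from_def is_dpath_def by auto
    have lq: "last q = u" using qd unfolding dpath_from_def by simp
    have "set q2 \<subseteq> Xs"
    proof
      fix w assume w: "w \<in> set q2"
      then obtain q3 q4 where qq2: "q2 = q3 @ w # q4" by (meson split_list)
      have wW: "w \<in> W" using w qq qW by auto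
      have wB: "w \<notin> B" using fq2 w by (metis (mono_tags, lifting) filter_empty_conv)
      have ex: "dpath_from W E x w (q1 @ y # q3 @ [w])"
      proof -
        have "q = (q1 @ y # q3 @ [w]) @ q4" using qq qq2 by simp
        then have "is_dpath W E (q1 @ y # q3 @ [w])" using dp_app1[of W E "q1 @ y # q3 @ [w]" q4] qdp by simp
        moreover have "hd (q1 @ y # q3 @ [w]) = x"
          using qq unfolding q_def by (cases q1) auto
        ultimately show ?thesis unfolding dpath_from_def by simp
      qed
      define Ey where "Ey = {(c,d) \<in> E. c \<noteq> y \<and> d \<noteq> y}"
      have wu: "(w,u) \<in> Ey\<^sup>*"
      proof -
        have "q = (q1 @ y # q3) @ (w # q4)" using qq qq2 by simp
        then have "is_dpath W E (w # q4)" using dp_app2 qdp by (metis list.distinct(1))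
        moreover have "y \<notin> set (w # q4)" using yq2 qq2 by simp
        moreover have "last (w # q4) = u" using lq qq qq2 by simp
        ultimately show ?thesis using avoid_y[of W E "w # q4" y] unfolding Ey_def by simp
      qed
      have allp: "\<forall>P'. dpath_from W E x w P' \<longrightarrow> last (filter (\<lambda>v. v \<in> B) P') = y"
      proof (intro allI impI)
        fix P' assume P': "dpath_from W E x w P'"
        have P'd: "is_dpath W E P'" "hd P' = x" "last P' = w" "P' \<noteq> []"
          using P' unfolding dpath_from_def is_dpath_def by auto
        have fne': "filter (\<lambda>v. v \<in> B) P' \<noteq> []"
          using P'd xB by (metis (mono_tags, lifting) filter_empty_conv hd_in_set)
        define a where "a = last (filter (\<lambda>v. v \<in> B) P')"
        show "last (filter (\<lambda>v. v \<in> B) P') = y"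
        proof (rule ccontr)
          assume ay: "last (filter (\<lambda>v. v \<in> B) P') \<noteq> y"
          have xw: "(x,w) \<in> Ey\<^sup>*"
          proof (cases "y \<in> set P'")
            case False
            then show ?thesis using avoid_y[OF P'd(1)] P'd unfolding Ey_def by simp
          next
            case True
            obtain P1 P2 where PP: "P' = P1 @ a # P2" "filter (\<lambda>v. v \<in> B) P2 = []"
              using F_split[OF fne'] unfolding a_def by blast
            have aB: "a \<in> B" using F_last_in[OF fne'] unfolding a_def by simp
            have ya: "y \<noteq> a" using ay unfolding a_def by simp
            have yP2: "y \<notin> set (a # P2)" using PP(2) yB ya
              by (metis (mono_tags, lifting) filter_empty_conv set_ConsD)
            have aw: "(a,w) \<in> Ey\<^sup>*"
            proof -
              have "is_dpath W E (a # P2)" using dp_app2 P'd(1) PP(1) by (metis list.distinct(1))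
              moreover have "last (a # P2) = w" using P'd PP by simp
              ultimately show ?thesis using avoid_y[of W E "a # P2" y] yP2 unfolding Ey_def by simp
            qed
            have xa: "(x,a) \<in> Ey\<^sup>*"
            proof (cases "a = x")
              case True then show ?thesis by simp
            next
              case ax: False
              then have "bireachable W E x a \<or> (x,a) \<in> E" using aB unfolding B_def diblock_def by auto
              then show ?thesis
              proof
                assume "(x,a) \<in> E"
                then show ?thesis using yB ya unfolding Ey_def by auto
              next
                assume "bireachable W E x a"
                then obtain pa qa where pq: "dpath_from W E x a pa" "dpath_from W E x a qa"
                  "internal_verts pa \<inter> internal_verts qa = {}" unfolding bireachable_def by blast
                have "y \<notin> internal_verts pa \<or> y \<notin> internal_verts qa" using pq(3) by auto
                then obtain pp' where pp': "dpath_from W E x a pp'" "y \<notin> internal_verts pp'"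
                  using pq by blast
                have "pp' \<noteq> []" using pp' unfolding dpath_from_def is_dpath_def by simp
                then have "y \<notin> set pp'" using internal_cover[of pp'] pp' yB ya unfolding dpath_from_def by auto
                then show ?thesis using avoid_y[of W E pp' y] pp' unfolding dpath_from_def Ey_def by simp
              qed
            qed
            show ?thesis using xa aw by simp
          qed
          have xu: "(x,u) \<in> Ey\<^sup>*" using xw wu by simp
          have "Ey \<subseteq> E \<inter> ((W - {y}) \<times> (W - {y}))" using EW unfolding Ey_def by auto
          moreover have "x \<in> W - {y}" using qW yB unfolding q_def by auto
          ultimately obtain P'' where P'': "dpath_from W E x u P''" "set P'' \<subseteq> W - {y}"
            using W2P[OF xu] by blast
          have "last (filter (\<lambda>v. v \<in> B) P'') = y"
            using uX P'' unfolding Xs_def Xset_def B_def by blast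
          moreover have "filter (\<lambda>v. v \<in> B) P'' \<noteq> []"
            using P'' xB unfolding dpath_from_def is_dpath_def
            by (metis (mono_tags, lifting) filter_empty_conv hd_in_set)
          ultimately have "y \<in> set P''" using F_last_in by metis
          then show False using P'' by auto
        qed
      qed
      show "w \<in> Xs" unfolding Xs_def Xset_def using wW wB ex allp unfolding B_def by blast
    qed
    then show ?thesis using pp qq unfolding q_def Xs_def E_def
      by (intro exI[of _ "p1 @ q1"] exI[of _ q2]) auto
  qed
qed

lemma cd_inv: "cd_node V A r x W \<Longrightarrow> Inv V A r x W"
proof (induction rule: cd_node.induct)
  case cd_root
  show ?case unfolding Inv_def
  proof (intro allI impI)
    fix p u assume "dpath_from V A r u p"
    then have "p = [] @ r # tl p" "set p \<subseteq> V" unfolding dpath_from_def is_dpath_def by auto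
    then show "\<exists>p1 p2. p = p1 @ r # p2 \<and> set (r # p2) \<subseteq> V" by (metis append_Nil)
  qed
next
  case (cd_child x W y)
  show ?case by (rule step_inv[OF cd_child.IH cd_child.hyps(2)])
qed


lemma dp_arc: "is_dpath V A (xs @ a # b # ys) \<Longrightarrow> (a,b) \<in> A"
proof -
  assume h: "is_dpath V A (xs @ a # b # ys)"
  have "Suc (length xs) < length (xs @ a # b # ys)" by simp
  then have "((xs @ a # b # ys) ! length xs, (xs @ a # b # ys) ! Suc (length xs)) \<in> A"
    using h unfolding is_dpath_def by blast
  moreover have "(xs @ a # b # ys) ! Suc (length xs) = b"
    by (metis add_Suc_right add_0_right nth_Cons_0 nth_Cons_Suc nth_append_length_plus)
  ultimately show ?thesis by simp
qed

theorem corollary1: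
  fixes V :: "'a set" and A :: "('a \<times> 'a) set" and r :: 'a
  assumes "digraph V A"
    and "card V \<ge> 2"
    and "r \<in> V"
    and "\<forall>v\<in>V. (r, v) \<in> A\<^sup>*"
  shows "\<forall>VT AT. VT \<subseteq> V \<and> AT \<subseteq> A \<and> out_tree VT AT r \<longrightarrow> AT \<inter> R_arcs V A r = {}"
proof (intro allI impI)
  fix VT AT assume h: "VT \<subseteq> V \<and> AT \<subseteq> A \<and> out_tree VT AT r"
  then have VT: "VT \<subseteq> V" and AT: "AT \<subseteq> A" and ot: "out_tree VT AT r" by auto
  have sub: "AT \<subseteq> VT \<times> VT" and zero: "{v \<in> VT. \<not> (\<exists>u. (u, v) \<in> AT)} = {r}" and rVT: "r \<in> VT"
    using ot unfolding out_tree_def by auto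
  show "AT \<inter> R_arcs V A r = {}"
  proof (rule ccontr)
    assume "AT \<inter> R_arcs V A r \<noteq> {}"
    then obtain u v where uv: "(u,v) \<in> AT" "(u,v) \<in> R_arcs V A r" by auto
    then obtain Wv x Wx where c1: "cd_node V A r v Wv" and c2: "cd_node Wv (induced_arcs A Wv) v x Wx"
      and uB: "u \<in> diblock Wx (induced_arcs A Wx) x"
      unfolding R_arcs_def by blast
    have s1: "v \<in> Wv" "Wv \<subseteq> V" using cd_sub[OF c1 assms(3)] by auto
    have s2: "x \<in> Wx" "Wx \<subseteq> Wv" using cd_sub[OF c2 s1(1)] by auto
    have "diblock Wx (induced_arcs A Wx) x \<subseteq> Wx" using s2(1) unfolding diblock_def by blast
    then have uWv: "u \<in> Wv" using uB s2 by blast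
    have uv_ne: "u \<noteq> v" using uv(1) AT assms(1) unfolding digraph_def by auto
    have vr: "v \<noteq> r"
    proof
      assume "v = r"
      then have "r \<in> {v \<in> VT. \<not> (\<exists>u. (u, v) \<in> AT)}" using zero by simp
      then show False using uv(1) \<open>v = r\<close> by blast
    qed
    have uvT: "u \<in> VT" "v \<in> VT" using uv(1) sub by auto
    have "(r,u) \<in> AT\<^sup>*" using tree_reach[OF ot uvT(1)] .
    then obtain p where p: "dpath_from VT AT r u p"
      using W2P[of r u AT AT VT VT] sub rVT by auto
    then have pV: "dpath_from V A r u p" using dp_mono2[OF _ VT AT] unfolding dpath_from_def by simp
    have "\<exists>p1 p2. p = p1 @ v # p2 \<and> set (v # p2) \<subseteq> Wv" using cd_inv[OF c1] pV uWv unfolding Inv_def by simp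
    then obtain p1 p2 where pp: "p = p1 @ v # p2" by auto
    have hp: "hd p = r" "last p = u" and dist: "distinct p" and pd: "is_dpath VT AT p"
      using p unfolding dpath_from_def is_dpath_def by auto
    have p1ne: "p1 \<noteq> []" using hp vr pp by auto
    have "p = butlast p1 @ last p1 # v # p2" using pp p1ne by simp
    then have arc: "(last p1, v) \<in> AT" using dp_arc[of VT AT "butlast p1" "last p1" v p2] pd by simp
    have p2ne: "p2 \<noteq> []" using hp pp uv_ne by auto
    have "last p = last p2" using pp p2ne by simp
    then have "u \<in> set p2" using hp(2) p2ne last_in_set[of p2] by simp
    moreover have "last p1 \<in> set p1" using p1ne by simp
    moreover have "set p1 \<inter> set p2 = {}" using dist pp by simp
    ultimately have "last p1 \<noteq> u" by blast
    moreover have "last p1 = u" using tree_unique_parent[OF ot uvT(2) vr arc uv(1)] .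
    ultimately show False by simp
  qed
qed

end
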